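(* Let $(q_n)_{n\ge0}$ be a sequence of real numbers. There exists a non-negative Borel measure $M$ on $\mathbb R$ such that $q_n=\int_{\mathbb R}\mu^n\,dM(\mu)$ for all $n=0,1,2,\ldots$ and $M(\mathbb R\setminus(-1,1))=0$ if and only if $\sum_{n,m\ge0}q_{n+m}g_m\bar g_n\ge0$ for all $g\in\mathcal D$ and $q_n\to0$ as $n\to\infty$ (equivalently, given the non-negativity, the form $\sum_{n,m\ge0}q_{n+m}g_m\bar g_n$ on $\mathcal D$ admits a closure in $\ell^2(\mathbb Z_+)$).
   Context: $\ell^2(\mathbb Z_+)$ is the Hilbert space of square-summable complex sequences $g=(g_0,g_1,\ldots)$, and $\mathcal D$ is the dense subspace of sequences with finitely many non-zero entries. A form admits a closure if it has a closed extension in $\ell^2(\mathbb Z_+)$. *)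

theory Defs
  imports "HOL-Analysis.Analysis" "HOL-Library.Complex_Order"
begin

definition finseq :: "(nat \<Rightarrow> complex) set" where
  "finseq = {g. finite {n. g n \<noteq> 0}}"

definition hankel_form :: "(nat \<Rightarrow> real) \<Rightarrow> (nat \<Rightarrow> complex) \<Rightarrow> complex" where
  "hankel_form q g = (\<Sum>n\<in>{k. g k \<noteq> 0}. \<Sum>m\<in>{k. g k \<noteq> 0}.
       complex_of_real (q (n + m)) * g m * cnj (g n))"

end

theory Submission
  imports Defs "HOL-Computational_Algebra.Polynomial" "HOL-Combinatorics.Stirling" "HOL-Probability.Probability"
begin

definition Lq :: "(nat \<Rightarrow> real) \<Rightarrow> real poly \<Rightarrow> real" where
  "Lq q p = (\<Sum>i\<le>degree p. coeff p i * q i)"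

lemma Lq_ext: "degree p \<le> n \<Longrightarrow> Lq q p = (\<Sum>i\<le>n. coeff p i * q i)"
  unfolding Lq_def by (rule sum.mono_neutral_left) (auto simp: coeff_eq_0)

lemma Lq_add: "Lq q (p + r) = Lq q p + Lq q r"
proof -
  let ?n = "max (degree p) (degree r)"
  have "degree (p + r) \<le> ?n" by (rule degree_add_le) auto
  then show ?thesis
    by (simp add: Lq_ext[of _ ?n] sum.distrib algebra_simps)
qed

lemma Lq_smult: "Lq q (smult c p) = c * Lq q p"
  by (simp add: Lq_ext[of _ "degree p"] sum_distrib_left mult.assoc)

lemma Lq_0 [simp]: "Lq q 0 = 0"
  by (simp add: Lq_def)

lemma Lq_minus: "Lq q (- p) = - Lq q p"
  using Lq_smult[of q "-1" p] by simp

lemma Lq_diff: "Lq q (p - r) = Lq q p - Lq q r"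
  using Lq_add[of q p "-r"] Lq_minus[of q r] by simp

lemma Lq_sum: "Lq q (\<Sum>a\<in>A. f a) = (\<Sum>a\<in>A. Lq q (f a))"
  by (induction A rule: infinite_finite_induct) (auto simp: Lq_add)

lemma Lq_monom: "Lq q (monom c k) = c * q k"
proof -
  have "Lq q (monom c k) = (\<Sum>i\<le>k. coeff (monom c k) i * q i)"
    by (rule Lq_ext) (simp add: degree_monom_le)
  also have "\<dots> = c * q k"
    by (subst sum.remove[of _ k]) (auto simp: coeff_monom)
  finally show ?thesis .
qed

lemma Lq_mult: "Lq q (p * r) = (\<Sum>n\<le>degree p. \<Sum>m\<le>degree r. coeff p n * coeff r m * q (n + m))"
proof -
  have "p * r = (\<Sum>n\<le>degree p. monom (coeff p n) n) * (\<Sum>m\<le>degree r. monom (coeff r m) m)"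
    by (simp add: poly_as_sum_of_monoms)
  also have "\<dots> = (\<Sum>n\<le>degree p. \<Sum>m\<le>degree r. monom (coeff p n * coeff r m) (n + m))"
    by (simp add: sum_distrib_left sum_distrib_right mult_monom sum.swap[where A="{..degree r}"])
  finally show ?thesis by (simp add: Lq_sum Lq_monom)
qed

lemma Lq_shift: "Lq q (monom 1 k * r) = (\<Sum>m\<le>degree r. coeff r m * q (k + m))"
proof -
  have "Lq q (monom 1 k * r) = (\<Sum>m\<le>degree r. \<Sum>n\<le>k. (if n = k then coeff r m * q (n + m) else 0))"
  proof -
    have e: "(if k = n then 1 else 0) * coeff r m * q (n + m) = (if n = k then coeff r m * q (n + m) else 0)" for n m
      by auto
    show ?thesis
      by (simp add: Lq_mult degree_monom_eq coeff_monom e sum.swap[where A="{..k}"])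
  qed
  also have "\<dots> = (\<Sum>m\<le>degree r. coeff r m * q (k + m))"
    by (simp add: sum.delta')
  finally show ?thesis .
qed

lemma Lq_shift_bound:
  assumes "\<And>n. \<bar>q n\<bar> \<le> B"
  shows "\<bar>Lq q (monom 1 k * r)\<bar> \<le> B * (\<Sum>m\<le>degree r. \<bar>coeff r m\<bar>)"
proof -
  have "\<bar>Lq q (monom 1 k * r)\<bar> \<le> (\<Sum>m\<le>degree r. \<bar>coeff r m * q (k + m)\<bar>)"
    unfolding Lq_shift by (rule sum_abs)
  also have "\<dots> \<le> (\<Sum>m\<le>degree r. \<bar>coeff r m\<bar> * B)"
    by (rule sum_mono) (auto simp: abs_mult intro!: mult_left_mono assms)
  finally show ?thesis by (simp add: sum_distrib_left mult.commute)
qed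

lemma Lq_sq_nonneg:
  assumes H: "\<forall>g\<in>finseq. 0 \<le> hankel_form q g"
  shows "0 \<le> Lq q (p * p)"
proof -
  define g where "g i = complex_of_real (coeff p i)" for i
  define S where "S = {k. g k \<noteq> 0}"
  have S: "S \<subseteq> {..degree p}"
    by (auto simp: S_def g_def intro: le_degree)
  have fin: "finite S" using S finite_subset by blast
  then have "g \<in> finseq" by (simp add: finseq_def S_def)
  with H have "0 \<le> hankel_form q g" by blast
  also have "hankel_form q g = complex_of_real (\<Sum>n\<in>S. \<Sum>m\<in>S. q (n + m) * coeff p m * coeff p n)"
    unfolding hankel_form_def S_def[symmetric] by (simp add: g_def)
  also have "(\<Sum>n\<in>S. \<Sum>m\<in>S. q (n + m) * coeff p m * coeff p n)
      = (\<Sum>n\<le>degree p. \<Sum>m\<le>degree p. q (n + m) * coeff p m * coeff p n)"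
  proof -
    have z: "x \<notin> S \<Longrightarrow> coeff p x = 0" for x by (simp add: S_def g_def)
    have "(\<Sum>n\<in>S. \<Sum>m\<in>S. q (n + m) * coeff p m * coeff p n)
        = (\<Sum>n\<in>S. \<Sum>m\<le>degree p. q (n + m) * coeff p m * coeff p n)"
      by (intro sum.cong refl sum.mono_neutral_left S) (auto simp: z)
    also have "\<dots> = (\<Sum>n\<le>degree p. \<Sum>m\<le>degree p. q (n + m) * coeff p m * coeff p n)"
      by (intro sum.mono_neutral_left S) (auto simp: z)
    finally show ?thesis .
  qed
  also have "\<dots> = Lq q (p * p)"
    by (simp add: Lq_mult mult_ac)
  finally show ?thesis by (simp add: less_eq_complex_def)
qed

lemma quad_disc:
  fixes A B C :: real
  assumes "\<And>t. 0 \<le> A + 2*t*B + t^2*C" "0 \<le> C"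
  shows "B^2 \<le> A*C"
proof (cases "C = 0")
  case True
  have "B = 0"
  proof (rule ccontr)
    assume "B \<noteq> 0"
    have "0 \<le> A + 2*(-(A+1)/(2*B))*B + (-(A+1)/(2*B))^2*C" by (rule assms(1))
    also have "\<dots> = -1" using \<open>B \<noteq> 0\<close> True by (simp add: field_simps)
    finally show False by simp
  qed
  then show ?thesis using True by simp
next
  case False
  then have C: "C > 0" using assms(2) by simp
  have "0 \<le> A + 2*(-B/C)*B + (-B/C)^2*C" by (rule assms(1))
  also have "\<dots> = (A*C - B^2)/C" using C by (simp add: field_simps power2_eq_square)
  finally show ?thesis using C by (simp add: zero_le_divide_iff)
qed

lemma Lq_CS:
  assumes H: "\<forall>g\<in>finseq. 0 \<le> hankel_form q g"
  shows "(Lq q (u * v))^2 \<le> Lq q (u * u) * Lq q (v * v)"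
proof (rule quad_disc)
  fix t
  have "(u + smult t v) * (u + smult t v) = u * u + smult t (u * v) + (smult t (u * v) + smult t (smult t (v * v)))"
    by (simp only: distrib_left distrib_right mult_smult_left mult_smult_right mult.commute[of v u] add.assoc smult_add_right)
  then have "Lq q ((u + smult t v) * (u + smult t v)) = Lq q (u * u) + 2 * t * Lq q (u * v) + t^2 * Lq q (v * v)"
    by (simp only: Lq_add Lq_smult) (simp add: algebra_simps power2_eq_square)
  moreover have "0 \<le> Lq q ((u + smult t v) * (u + smult t v))" by (rule Lq_sq_nonneg[OF H])
  ultimately show "0 \<le> Lq q (u * u) + 2 * t * Lq q (u * v) + t^2 * Lq q (v * v)" by simp
qed (rule Lq_sq_nonneg[OF H])

lemma logconvex_bounded:
  fixes a :: "nat \<Rightarrow> real"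
  assumes nn: "\<And>k. 0 \<le> a k"
    and lc: "\<And>k. (a (Suc k))^2 \<le> a k * a (Suc (Suc k))"
    and bd: "\<And>k. a k \<le> B"
  shows "a 1 \<le> a 0"
proof (rule ccontr)
  assume "\<not> a 1 \<le> a 0"
  then have lt: "a 0 < a 1" by simp
  have a0: "a 0 > 0"
  proof (rule ccontr)
    assume "\<not> a 0 > 0"
    then have "a 0 = 0" using nn[of 0] by simp
    then have "(a 1)^2 \<le> 0" using lc[of 0] by simp
    then have "a 1 = 0" by simp
    then show False using lt \<open>a 0 = 0\<close> by simp
  qed
  define r where "r = a 1 / a 0"
  have r: "r > 1" using lt a0 by (simp add: r_def)
  have step: "a (Suc k) \<ge> r * a k \<and> a k > 0" for k
  proof (induction k)
    case 0
    then show ?case using a0 by (simp add: r_def)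
  next
    case (Suc k)
    then have ak: "a k > 0" and ge: "a (Suc k) \<ge> r * a k" by auto
    have "r * a k > 0" using ak r by simp
    then have pos: "a (Suc k) > 0" using ge by linarith
    have "a k * (r * a (Suc k)) = r * a k * a (Suc k)" by simp
    also have "\<dots> \<le> a (Suc k) * a (Suc k)" using ge pos by (simp add: mult_right_mono)
    also have "\<dots> \<le> a k * a (Suc (Suc k))" using lc[of k] by (simp add: power2_eq_square)
    finally have "r * a (Suc k) \<le> a (Suc (Suc k))" using ak by simp
    then show ?case using pos by simp
  qed
  have "a k \<ge> a 0 * r ^ k" for k
  proof (induction k)
    case (Suc k)
    have "a 0 * r ^ Suc k = r * (a 0 * r ^ k)" by simp
    also have "\<dots> \<le> r * a k" using Suc r by simp
    also have "\<dots> \<le> a (Suc k)" using step[of k] by simp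
    finally show ?case .
  qed simp
  moreover obtain n where "B / a 0 < r ^ n" using real_arch_pow[OF r] by blast
  then have "B < a 0 * r ^ n" using a0 by (simp add: field_simps)
  ultimately have "a 0 * r ^ n \<le> a n" "B < a 0 * r ^ n" by auto
  then show False using bd[of n] by linarith
qed

lemma Lq_X2_le:
  assumes H: "\<forall>g\<in>finseq. 0 \<le> hankel_form q g"
    and B: "\<And>n. \<bar>q n\<bar> \<le> B"
  shows "Lq q (monom 1 2 * (p * p)) \<le> Lq q (p * p)"
proof -
  define a where "a k = Lq q (monom 1 (2*k) * (p * p))" for k
  have sq: "monom 1 (2*k) * (p * p) = (monom 1 k * p) * (monom 1 k * p)" for k
  proof -
    have "monom (1::real) (2*k) = monom 1 k * monom 1 k" by (simp add: mult_monom mult_2)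
    then show ?thesis by (simp only: ac_simps)
  qed
  have nn: "0 \<le> a k" for k unfolding a_def sq by (rule Lq_sq_nonneg[OF H])
  have lc: "(a (Suc k))^2 \<le> a k * a (Suc (Suc k))" for k
  proof -
    have kk: "k + Suc (Suc k) = 2 * Suc k" by simp
    have "(monom 1 k * p) * (monom 1 (Suc (Suc k)) * p) = (monom 1 k * monom 1 (Suc (Suc k))) * (p * p)"
      by (simp only: ac_simps)
    also have "\<dots> = monom 1 (2 * Suc k) * (p * p)" by (simp only: mult_monom kk) simp
    finally have "(monom 1 k * p) * (monom 1 (Suc (Suc k)) * p) = monom 1 (2 * Suc k) * (p * p)" .
    then have e1: "a (Suc k) = Lq q ((monom 1 k * p) * (monom 1 (Suc (Suc k)) * p))"
      by (simp only: a_def)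
    have e2: "a k = Lq q ((monom 1 k * p) * (monom 1 k * p))" by (simp only: a_def sq)
    have e3: "a (Suc (Suc k)) = Lq q ((monom 1 (Suc (Suc k)) * p) * (monom 1 (Suc (Suc k)) * p))"
      by (simp only: a_def sq)
    show ?thesis unfolding e1 e2 e3 by (rule Lq_CS[OF H])
  qed
  have bd: "a k \<le> B * (\<Sum>m\<le>degree (p*p). \<bar>coeff (p*p) m\<bar>)" for k
    using Lq_shift_bound[of q B "2*k" "p*p", OF B] by (simp add: a_def)
  have "a 1 \<le> a 0" by (rule logconvex_bounded[of a, OF nn lc bd])
  then show ?thesis unfolding a_def by simp
qed



abbreviation "PP \<equiv> [:1, 1:] :: real poly"
abbreviation "QQ \<equiv> [:1, -1:] :: real poly"


context
  fixes q :: "nat \<Rightarrow> real" and B :: real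
  assumes H: "\<forall>g\<in>finseq. 0 \<le> hankel_form q g"
    and B: "\<And>n. \<bar>q n\<bar> \<le> B"
begin

lemma Lq_sqPQ: "0 \<le> Lq q (p * p * (PP * QQ))"
proof -
  have "p * p * (PP * QQ) = p * p - monom 1 2 * (p * p)"
    by (rule poly_ext) (simp add: poly_monom algebra_simps power2_eq_square)
  then show ?thesis using Lq_X2_le[OF H B, of p] by (simp add: Lq_diff)
qed

lemma Lq_sqP: "0 \<le> Lq q (p * p * PP)"
proof -
  have "p * p * PP = smult (1/2) ((PP * p) * (PP * p)) + smult (1/2) (p * p * (PP * QQ))"
    by (rule poly_ext) (simp add: algebra_simps)
  then show ?thesis using Lq_sqPQ[of p] Lq_sq_nonneg[OF H, of "PP * p"]
    by (simp add: Lq_add Lq_smult)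
qed

lemma Lq_sqQ: "0 \<le> Lq q (p * p * QQ)"
proof -
  have "p * p * QQ = smult (1/2) ((QQ * p) * (QQ * p)) + smult (1/2) (p * p * (PP * QQ))"
    by (rule poly_ext) (simp add: algebra_simps)
  then show ?thesis using Lq_sqPQ[of p] Lq_sq_nonneg[OF H, of "QQ * p"]
    by (simp add: Lq_add Lq_smult)
qed

lemma Lq_cone: "0 \<le> Lq q (PP ^ a * QQ ^ b)"
proof -
  define p where "p = PP ^ (a div 2) * QQ ^ (b div 2)"
  have a: "PP ^ a = PP ^ (a div 2) * PP ^ (a div 2) * PP ^ (a mod 2)"
    by (metis power_add mult_2 div_mult_mod_eq mult.commute)
  have b: "QQ ^ b = QQ ^ (b div 2) * QQ ^ (b div 2) * QQ ^ (b mod 2)"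
    by (metis power_add mult_2 div_mult_mod_eq mult.commute)
  have e: "PP ^ a * QQ ^ b = p * p * (PP ^ (a mod 2) * QQ ^ (b mod 2))"
    unfolding a b p_def by (simp only: ac_simps)
  have "a mod 2 = 0 \<or> a mod 2 = 1" "b mod 2 = 0 \<or> b mod 2 = 1" by auto
  then show ?thesis unfolding e
    using Lq_sq_nonneg[OF H, of p] Lq_sqP[of p] Lq_sqQ[of p] Lq_sqPQ[of p] by auto
qed

end



lemma binom_id:
  fixes a b :: "'a::comm_ring_1"
  shows "(\<Sum>k\<le>N. of_nat ((N choose k) * (k choose l)) * a ^ k * b ^ (N - k))
         = of_nat (N choose l) * a ^ l * (a + b) ^ (N - l)"
proof (cases "l \<le> N")
  case False
  then show ?thesis by (simp add: binomial_eq_0)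
next
  case True
  have "(\<Sum>k\<le>N. of_nat ((N choose k) * (k choose l)) * a ^ k * b ^ (N - k))
      = (\<Sum>k\<in>{l..N}. of_nat ((N choose k) * (k choose l)) * a ^ k * b ^ (N - k))"
    by (rule sum.mono_neutral_right) (auto simp: binomial_eq_0)
  also have "\<dots> = (\<Sum>j\<in>{0..N-l}. of_nat ((N choose (j + l)) * ((j + l) choose l)) * a ^ (j + l) * b ^ (N - (j + l)))"
    using sum.shift_bounds_cl_nat_ivl[of "\<lambda>k. of_nat ((N choose k) * (k choose l)) * a ^ k * b ^ (N - k)" 0 l "N - l"] True
    by simp
  also have "\<dots> = (\<Sum>j\<le>N-l. of_nat (N choose l) * a ^ l * (of_nat ((N - l) choose j) * a ^ j * b ^ (N - l - j)))"
  proof (rule sum.cong)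
    fix j assume "j \<in> {..N-l}"
    then have j: "j + l \<le> N" using True by simp
    have c: "(N choose (j + l)) * ((j + l) choose l) = (N choose l) * ((N - l) choose j)"
      using choose_mult[of l "j + l" N] j by simp
    show "of_nat ((N choose (j + l)) * ((j + l) choose l)) * a ^ (j + l) * b ^ (N - (j + l))
        = of_nat (N choose l) * a ^ l * (of_nat ((N - l) choose j) * a ^ j * b ^ (N - l - j))"
      unfolding c by (simp add: power_add algebra_simps diff_diff_add)
  qed (auto simp: atLeast0AtMost)
  also have "\<dots> = of_nat (N choose l) * a ^ l * (a + b) ^ (N - l)"
    by (simp add: binomial_ring sum_distrib_left)
  finally show ?thesis .
qed

definition ffr :: "nat \<Rightarrow> nat \<Rightarrow> real" where
  "ffr l k = (\<Prod>j<l. real k - real j)"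

lemma ffr_binom: "ffr l k = fact l * real (k choose l)"
proof -
  have "fact l * real (k choose l) = fact l * (real k gchoose l)"
    by (simp add: binomial_gbinomial)
  also have "\<dots> = (\<Prod>i = 0..<l. real k - of_nat i)" by (rule gbinomial_mult_fact)
  finally show ?thesis by (simp add: ffr_def atLeast0LessThan)
qed

lemma ffr_Suc: "ffr (Suc l) k = ffr l k * (real k - real l)"
  by (simp add: ffr_def)

lemma stirling_expand: "real k ^ i = (\<Sum>l\<le>i. real (Stirling i l) * ffr l k)"
proof (induction i)
  case 0
  then show ?case by (simp add: ffr_def)
next
  case (Suc i)
  have kf: "real k * ffr l k = ffr (Suc l) k + real l * ffr l k" for l
    by (simp add: ffr_Suc algebra_simps)
  have "real k ^ Suc i = (\<Sum>l\<le>i. real (Stirling i l) * (real k * ffr l k))"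
    by (simp add: Suc sum_distrib_left algebra_simps)
  also have "\<dots> = (\<Sum>l\<le>i. real (Stirling i l) * ffr (Suc l) k) + (\<Sum>l\<le>i. real l * real (Stirling i l) * ffr l k)"
    by (simp add: kf sum.distrib algebra_simps)
  also have "(\<Sum>l\<le>i. real l * real (Stirling i l) * ffr l k) = (\<Sum>l\<le>Suc i. real l * real (Stirling i l) * ffr l k)"
    by simp
  also have "\<dots> = (\<Sum>l\<le>i. real (Suc l) * real (Stirling i (Suc l)) * ffr (Suc l) k)"
    by (subst sum.atMost_Suc_shift) simp
  also have "(\<Sum>l\<le>i. real (Stirling i l) * ffr (Suc l) k) + (\<Sum>l\<le>i. real (Suc l) * real (Stirling i (Suc l)) * ffr (Suc l) k)
      = (\<Sum>l\<le>i. real (Stirling (Suc i) (Suc l)) * ffr (Suc l) k)"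
    by (simp add: sum.distrib[symmetric] algebra_simps)
  also have "\<dots> = (\<Sum>l\<le>Suc i. real (Stirling (Suc i) l) * ffr l k)"
    by (simp only: sum.atMost_Suc_shift) simp
  finally show ?case .
qed

definition TT :: "real poly" where "TT = smult (1/2) PP"
definition SS :: "real poly" where "SS = smult (1/2) QQ"
definition W :: "(nat \<Rightarrow> real) \<Rightarrow> nat \<Rightarrow> nat \<Rightarrow> real" where
  "W q N k = real (N choose k) * Lq q (TT ^ k * SS ^ (N - k))"
definition mm :: "(nat \<Rightarrow> real) \<Rightarrow> nat \<Rightarrow> real" where
  "mm q l = Lq q (TT ^ l)"

lemma TS_pow: "TT ^ k * SS ^ j = smult ((1/2) ^ (k + j)) (PP ^ k * QQ ^ j)"
  by (simp only: TT_def SS_def smult_power mult_smult_left mult_smult_right smult_smult power_add mult.commute)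

lemma TS_sum: "TT + SS = 1"
  by (simp add: TT_def SS_def one_pCons)

lemma W_nonneg:
  assumes H: "\<forall>g\<in>finseq. 0 \<le> hankel_form q g" and B: "\<And>n. \<bar>q n\<bar> \<le> B"
  shows "0 \<le> W q N k"
  unfolding W_def TS_pow Lq_smult using Lq_cone[OF H B, of k "N - k"] by simp

lemma fmom: "(\<Sum>k\<le>N. W q N k * real (k choose l)) = real (N choose l) * mm q l"
proof -
  have "(\<Sum>k\<le>N. smult (real ((N choose k) * (k choose l))) (TT ^ k * SS ^ (N - k))) = smult (real (N choose l)) (TT ^ l)"
    using binom_id[of N l TT SS] by (simp add: TS_sum of_nat_poly mult.assoc)
  then have "Lq q (\<Sum>k\<le>N. smult (real ((N choose k) * (k choose l))) (TT ^ k * SS ^ (N - k))) = real (N choose l) * mm q l"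
    by (simp add: Lq_smult mm_def)
  then show ?thesis by (simp add: Lq_sum Lq_smult W_def algebra_simps)
qed

lemma mom_pow: "(\<Sum>k\<le>N. W q N k * real k ^ j) = (\<Sum>l\<le>j. real (Stirling j l) * ffr l N * mm q l)"
proof -
  have "(\<Sum>k\<le>N. W q N k * real k ^ j) = (\<Sum>k\<le>N. \<Sum>l\<le>j. real (Stirling j l) * fact l * (W q N k * real (k choose l)))"
    by (simp add: stirling_expand ffr_binom sum_distrib_left algebra_simps)
  also have "\<dots> = (\<Sum>l\<le>j. real (Stirling j l) * fact l * (\<Sum>k\<le>N. W q N k * real (k choose l)))"
    by (simp add: sum.swap[of _ "{..N}"] sum_distrib_left)
  also have "\<dots> = (\<Sum>l\<le>j. real (Stirling j l) * ffr l N * mm q l)"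
    by (simp only: fmom ffr_binom) (simp add: algebra_simps)
  finally show ?thesis .
qed

lemma ffr_le: "0 \<le> ffr l N \<and> ffr l N \<le> real N ^ l"
proof -
  have "(N choose l) * fact l \<le> N ^ l" by (rule binomial_fact_pow)
  then have "real ((N choose l) * fact l) \<le> real (N ^ l)" by (simp only: of_nat_le_iff)
  then show ?thesis by (simp add: ffr_binom mult.commute)
qed

lemma ffr_lim: "(\<lambda>N. ffr l N / real N ^ j) \<longlonglongrightarrow> (if l = j then 1 else 0)" if "l \<le> j"
proof (cases "l = j")
  case True
  have "(\<lambda>N. \<Prod>i<j. 1 - real i * (1 / real N)) \<longlonglongrightarrow> (\<Prod>i<j. 1 - real i * 0)"
    by (intro tendsto_prod tendsto_diff tendsto_const tendsto_mult lim_1_over_n)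
  moreover have "eventually (\<lambda>N. (\<Prod>i<j. 1 - real i * (1 / real N)) = ffr l N / real N ^ j) sequentially"
    using eventually_gt_at_top[of 0]
  proof eventually_elim
    case (elim N)
    have "ffr l N / real N ^ j = (\<Prod>i<j. real N - real i) / (\<Prod>i<j. real N)"
      by (simp add: ffr_def True)
    also have "\<dots> = (\<Prod>i<j. (real N - real i) / real N)" by (rule prod_dividef[symmetric])
    also have "\<dots> = (\<Prod>i<j. 1 - real i * (1 / real N))"
      using elim by (intro prod.cong) (auto simp: field_simps)
    finally show ?case by simp
  qed
  ultimately show ?thesis using True by (simp add: tendsto_cong)
next
  case False
  then have lj: "l < j" using that by simp
  have "(\<lambda>N. (1 / real N) ^ (j - l)) \<longlonglongrightarrow> 0 ^ (j - l)"
    by (intro tendsto_power lim_1_over_n)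
  moreover have "(0::real) ^ (j - l) = 0" using lj by simp
  ultimately have lim0: "(\<lambda>N. (1 / real N) ^ (j - l)) \<longlonglongrightarrow> 0" by simp
  have "(\<lambda>N. ffr l N / real N ^ j) \<longlonglongrightarrow> 0"
  proof (rule tendsto_sandwich[OF _ _ tendsto_const lim0])
    show "eventually (\<lambda>N. 0 \<le> ffr l N / real N ^ j) sequentially"
      using ffr_le by (auto intro!: divide_nonneg_nonneg)
    show "eventually (\<lambda>N. ffr l N / real N ^ j \<le> (1 / real N) ^ (j - l)) sequentially"
      using eventually_gt_at_top[of 0]
    proof eventually_elim
      case (elim N)
      have "ffr l N / real N ^ j \<le> real N ^ l / real N ^ j"
        using ffr_le[of l N] elim by (intro divide_right_mono) auto
      also have "\<dots> = (1 / real N) ^ (j - l)"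
        using elim lj by (simp add: power_diff power_one_over field_simps)
      finally show ?case .
    qed
  qed
  then show ?thesis using False by simp
qed

lemma mom_scaled_lim: "(\<lambda>N. (\<Sum>k\<le>N. W q N k * (real k / real N) ^ j)) \<longlonglongrightarrow> mm q j"
proof -
  have e: "(\<Sum>k\<le>N. W q N k * (real k / real N) ^ j) = (\<Sum>l\<le>j. real (Stirling j l) * mm q l * (ffr l N / real N ^ j))" for N
  proof -
    have "(\<Sum>k\<le>N. W q N k * (real k / real N) ^ j) = (\<Sum>k\<le>N. W q N k * real k ^ j) / real N ^ j"
      by (simp add: power_divide sum_divide_distrib)
    also have "\<dots> = (\<Sum>l\<le>j. real (Stirling j l) * mm q l * (ffr l N / real N ^ j))"
      by (simp only: mom_pow sum_divide_distrib) (simp add: algebra_simps)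
    finally show ?thesis .
  qed
  have "(\<lambda>N. (\<Sum>l\<le>j. real (Stirling j l) * mm q l * (ffr l N / real N ^ j)))
      \<longlonglongrightarrow> (\<Sum>l\<le>j. real (Stirling j l) * mm q l * (if l = j then 1 else 0))"
    by (intro tendsto_sum tendsto_mult tendsto_const ffr_lim) simp
  also have "(\<Sum>l\<le>j. real (Stirling j l) * mm q l * (if l = j then 1 else 0)) = mm q j"
    by (simp add: if_distrib[of "\<lambda>x. _ * x"] cong: if_cong)
  finally show ?thesis unfolding e .
qed

lemma neg1_pow_poly: "(-1 :: real poly) ^ m = [:(-1) ^ m:]"
  by (induction m) simp_all

lemma q_as_mm: "q i = (\<Sum>j\<le>i. real (i choose j) * 2 ^ j * (-1) ^ (i - j) * mm q j)"
proof -
  have X: "smult 2 TT + (-1) = [:0, 1:]"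
    by (simp add: TT_def one_pCons)
  have "monom 1 i = (smult 2 TT + (-1)) ^ i" by (simp only: X monom_altdef smult_1_left)
  also have "\<dots> = (\<Sum>j\<le>i. of_nat (i choose j) * (smult 2 TT) ^ j * (-1) ^ (i - j))"
    by (rule binomial_ring)
  also have "\<dots> = (\<Sum>j\<le>i. smult (real (i choose j) * 2 ^ j * (-1) ^ (i - j)) (TT ^ j))"
    by (intro sum.cong refl) (simp add: neg1_pow_poly of_nat_poly smult_power mult_smult_left mult_smult_right mult_ac)
  finally have "Lq q (monom 1 i) = (\<Sum>j\<le>i. real (i choose j) * 2 ^ j * (-1) ^ (i - j) * mm q j)"
    by (simp add: Lq_sum Lq_smult mm_def)
  then show ?thesis by (simp add: Lq_monom)
qed

lemma mom_lim: "(\<lambda>N. (\<Sum>k\<le>N. W q N k * (2 * real k / real N - 1) ^ i)) \<longlonglongrightarrow> q i"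
proof -
  have e: "(\<Sum>k\<le>N. W q N k * (2 * real k / real N - 1) ^ i)
      = (\<Sum>j\<le>i. real (i choose j) * 2 ^ j * (-1) ^ (i - j) * (\<Sum>k\<le>N. W q N k * (real k / real N) ^ j))" for N
  proof -
    have "(2 * real k / real N - 1) ^ i = (\<Sum>j\<le>i. real (i choose j) * 2 ^ j * (-1) ^ (i - j) * (real k / real N) ^ j)" for k
    proof -
      have "(2 * real k / real N - 1) ^ i = (2 * (real k / real N) + (-1)) ^ i" by simp
      also have "\<dots> = (\<Sum>j\<le>i. of_nat (i choose j) * (2 * (real k / real N)) ^ j * (-1) ^ (i - j))"
        by (rule binomial_ring)
      also have "\<dots> = (\<Sum>j\<le>i. real (i choose j) * 2 ^ j * (-1) ^ (i - j) * (real k / real N) ^ j)"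
        by (simp only: power_mult_distrib) (simp add: algebra_simps)
      finally show ?thesis .
    qed
    then show ?thesis
      by (simp add: sum_distrib_left sum.swap[of _ "{..N}"] algebra_simps)
  qed
  show ?thesis unfolding e q_as_mm[of q i]
    by (intro tendsto_sum tendsto_mult tendsto_const mom_scaled_lim)
qed



lemma reverse_dir:
  fixes q :: "nat \<Rightarrow> real"
  assumes H: "\<forall>g\<in>finseq. 0 \<le> hankel_form q g" and lim: "q \<longlonglongrightarrow> 0"
  shows "\<exists>M :: real measure. sets M = sets borel \<and>
            (\<forall>n. integrable M (\<lambda>\<mu>. \<mu> ^ n) \<and> q n = (\<integral>\<mu>. \<mu> ^ n \<partial>M)) \<and>
            emeasure M (UNIV - {-1<..<1}) = 0"
proof -
  obtain B where B: "\<And>n. \<bar>q n\<bar> \<le> B"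
    using convergent_imp_Bseq[of q] lim by (auto simp: Bseq_def convergent_def)
  have q0: "Lq q 1 = q 0" using Lq_monom[of q 1 0] by simp
  have q0nn: "0 \<le> q 0" using Lq_sq_nonneg[OF H, of 1] q0 by simp
  show ?thesis
  proof (cases "q 0 = 0")
    case True
    have qz: "q n = 0" for n
    proof -
      have "(Lq q (1 * monom 1 n))^2 \<le> Lq q (1 * 1) * Lq q (monom 1 n * monom 1 n)" by (rule Lq_CS[OF H])
      then have "(q n)^2 \<le> 0" using True q0 by (simp add: Lq_monom)
      then show ?thesis by simp
    qed
    show ?thesis by (intro exI[of _ "null_measure borel"]) (auto simp: qz)
  next
    case False
    then have c: "q 0 > 0" using q0nn by simp
    define w where "w N k = (if k \<le> Suc N then W q (Suc N) k / q 0 else 0)" for N k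
    define xs where "xs N k = 2 * real k / real (Suc N) - 1" for N k
    have wnn: "0 \<le> w N k" for N k using W_nonneg[OF H B] c by (simp add: w_def)
    have mm0: "mm q 0 = q 0" by (simp add: mm_def q0)
    have wsum: "(\<Sum>k\<le>Suc N. w N k) = 1" for N
    proof -
      have "(\<Sum>k\<le>Suc N. w N k) = (\<Sum>k\<le>Suc N. W q (Suc N) k / q 0)"
        by (intro sum.cong) (auto simp: w_def)
      also have "\<dots> = (\<Sum>k\<le>Suc N. W q (Suc N) k * real (k choose 0)) / q 0"
        by (simp only: sum_divide_distrib binomial_n_0 of_nat_1 mult_1_right)
      also have "\<dots> = 1" using c by (simp only: fmom mm0) simp
      finally show ?thesis .
    qed
    have wprob: "(\<integral>\<^sup>+k. ennreal (w N k) \<partial>count_space UNIV) = 1" for N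
    proof -
      have "(\<integral>\<^sup>+k. ennreal (w N k) \<partial>count_space UNIV) = (\<Sum>k\<le>Suc N. ennreal (w N k))"
        by (rule nn_integral_count_space') (auto simp: w_def)
      also have "\<dots> = ennreal (\<Sum>k\<le>Suc N. w N k)" by (rule sum_ennreal) (rule wnn)
      finally show ?thesis using wsum by simp
    qed
    define P where "P N = embed_pmf (w N)" for N
    have pmfP: "pmf (P N) k = w N k" for N k
      unfolding P_def by (rule pmf_embed_pmf[OF wnn wprob])
    have setP: "set_pmf (P N) \<subseteq> {..Suc N}" for N
      by (auto simp: set_pmf_eq pmfP w_def split: if_splits)
    define \<mu> where "\<mu> N = distr (measure_pmf (P N)) borel (xs N)" for N
    have int_\<mu>: "integral\<^sup>L (\<mu> N) f = (\<Sum>k\<le>Suc N. w N k * f (xs N k))"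
      if "f \<in> borel_measurable borel" for N f
    proof -
      have "integral\<^sup>L (\<mu> N) f = (\<integral>k. f (xs N k) \<partial>measure_pmf (P N))"
        unfolding \<mu>_def by (rule integral_distr) (auto simp: that)
      also have "\<dots> = (\<Sum>k\<le>Suc N. f (xs N k) * pmf (P N) k)"
        by (rule integral_measure_pmf_real) (use setP in auto)
      finally show ?thesis by (simp add: pmfP mult.commute)
    qed
    have rd: "real_distribution (\<mu> N)" for N
      unfolding real_distribution_def real_distribution_axioms_def \<mu>_def
      by (auto intro!: prob_space.prob_space_distr prob_space_measure_pmf)
    have space_\<mu>: "space (\<mu> N) = UNIV" for N by (simp add: \<mu>_def)
    have xs_in: "xs N k \<in> {-1..1}" if "k \<le> Suc N" for N k
      using that by (auto simp: xs_def field_simps)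
    have tight: "tight \<mu>"
      unfolding tight_def
    proof (intro conjI allI impI)
      show "real_distribution (\<mu> n)" for n by (rule rd)
      fix \<epsilon> :: real assume "0 < \<epsilon>"
      have "measure (\<mu> n) {-2<..2} = 1" for n
      proof -
        have "measure (\<mu> n) {-2<..2} = integral\<^sup>L (\<mu> n) (indicator {-2<..2})"
          by (simp add: space_\<mu>)
        also have "\<dots> = (\<Sum>k\<le>Suc n. w n k * indicator {-2<..2::real} (xs n k))" by (rule int_\<mu>) simp
        also have "\<dots> = (\<Sum>k\<le>Suc n. w n k)"
        proof (intro sum.cong refl)
          fix k assume "k \<in> {..Suc n}"
          then have "xs n k \<in> {-2<..2}" using xs_in[of k n] by auto
          then show "w n k * indicator {-2<..2::real} (xs n k) = w n k" by simp
        qed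
        finally show ?thesis using wsum by simp
      qed
      then show "\<exists>a b. a < b \<and> (\<forall>n. 1 - \<epsilon> < measure (\<mu> n) {a<..b})"
        using \<open>0 < \<epsilon>\<close> by (intro exI[of _ "-2"] exI[of _ 2]) auto
    qed
    obtain r M' where r: "strict_mono r" and M': "real_distribution M'"
      and wc: "weak_conv_m (\<mu> \<circ> id \<circ> r) M'"
      using tight_imp_convergent_subsubsequence[OF tight strict_mono_id] by blast
    interpret M': real_distribution M' by (rule M')
    define h where "h x = max (-1) (min 1 x)" for x :: real
    have hc: "isCont (\<lambda>x. h x ^ i) x" for x i unfolding h_def by (intro continuous_intros)
    have hb: "norm (h x ^ i) \<le> 1" for x i
    proof -
      have "\<bar>h x\<bar> \<le> 1" by (simp add: h_def)
      then have "\<bar>h x\<bar> ^ i \<le> 1" by (intro power_le_one) auto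
      then show ?thesis by (simp add: power_abs)
    qed
    have hx: "h x = x" if "x \<in> {-1..1}" for x using that by (simp add: h_def)
    have conv_h: "(\<lambda>N. integral\<^sup>L ((\<mu> \<circ> id \<circ> r) N) (\<lambda>x. h x ^ i)) \<longlonglongrightarrow> integral\<^sup>L M' (\<lambda>x. h x ^ i)" for i
      by (rule weak_conv_imp_integral_bdd_continuous_conv[OF _ M' wc hc hb]) (simp add: rd)
    have mom_\<mu>: "(\<lambda>N. integral\<^sup>L (\<mu> N) (\<lambda>x. h x ^ i)) \<longlonglongrightarrow> q i / q 0" for i
    proof -
      have e: "integral\<^sup>L (\<mu> N) (\<lambda>x. h x ^ i)
          = (\<Sum>k\<le>Suc N. W q (Suc N) k * (2 * real k / real (Suc N) - 1) ^ i) / q 0" for N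
      proof -
        have "integral\<^sup>L (\<mu> N) (\<lambda>x. h x ^ i) = (\<Sum>k\<le>Suc N. w N k * h (xs N k) ^ i)"
          by (rule int_\<mu>) (simp add: h_def)
        also have "\<dots> = (\<Sum>k\<le>Suc N. W q (Suc N) k * (2 * real k / real (Suc N) - 1) ^ i / q 0)"
        proof (intro sum.cong refl)
          fix k assume k: "k \<in> {..Suc N}"
          then have "h (xs N k) = xs N k" using hx xs_in by auto
          then have "w N k * h (xs N k) ^ i = w N k * xs N k ^ i" by simp
          also have "\<dots> = W q (Suc N) k * (2 * real k / real (Suc N) - 1) ^ i / q 0"
            using k by (simp add: w_def xs_def)
          finally show "w N k * h (xs N k) ^ i = W q (Suc N) k * (2 * real k / real (Suc N) - 1) ^ i / q 0" .
        qed
        finally show ?thesis by (simp only: sum_divide_distrib)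
      qed
      have "(\<lambda>N. (\<Sum>k\<le>Suc N. W q (Suc N) k * (2 * real k / real (Suc N) - 1) ^ i)) \<longlonglongrightarrow> q i"
        using mom_lim[of q i] by (rule LIMSEQ_Suc)
      then show ?thesis unfolding e by (intro tendsto_divide tendsto_const) (use c in auto)
    qed
    have Mh: "integral\<^sup>L M' (\<lambda>x. h x ^ i) = q i / q 0" for i
    proof (rule LIMSEQ_unique[OF conv_h])
      show "(\<lambda>N. integral\<^sup>L ((\<mu> \<circ> id \<circ> r) N) (\<lambda>x. h x ^ i)) \<longlonglongrightarrow> q i / q 0"
        using LIMSEQ_subseq_LIMSEQ[OF mom_\<mu> r] by (simp add: comp_def)
    qed
    have hmeas: "(\<lambda>x. h x ^ i) \<in> borel_measurable M'" for i
      by (simp add: h_def)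
    have hint: "integrable M' (\<lambda>x. h x ^ i)" for i
      by (rule M'.integrable_const_bound[where B=1]) (use hb hmeas in auto)
    define A where "A = {x::real. 1 \<le> \<bar>x\<bar>}"
    have Ameas: "A \<in> sets M'" unfolding A_def by simp
    have Ale: "measure M' A \<le> q (2 * n) / q 0" for n
    proof -
      have "measure M' A = integral\<^sup>L M' (indicator A)" by simp
      also have "\<dots> \<le> integral\<^sup>L M' (\<lambda>x. h x ^ (2 * n))"
      proof (rule integral_mono)
        show "integrable M' (indicator A :: real \<Rightarrow> real)"
          using Ameas by (simp add: M'.emeasure_eq_measure)
        show "integrable M' (\<lambda>x. h x ^ (2 * n))" by (rule hint)
        fix x
        show "indicator A x \<le> h x ^ (2 * n)"
        proof (cases "x \<in> A")
          case True
          then have "h x = 1 \<or> h x = -1" by (auto simp: A_def h_def)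
          then show ?thesis using True by (auto simp: power_mult)
        next
          case False
          then show ?thesis by (simp add: power_mult)
        qed
      qed
      finally show ?thesis by (simp add: Mh)
    qed
    have "(\<lambda>n. q (2 * n) / q 0) \<longlonglongrightarrow> 0 / q 0"
      by (intro tendsto_divide tendsto_const LIMSEQ_subseq_LIMSEQ[OF lim, unfolded comp_def])
         (use c in \<open>auto simp: strict_mono_def\<close>)
    then have "measure M' A \<le> 0"
      by (intro LIMSEQ_le_const[of "\<lambda>n. q (2 * n) / q 0"]) (auto intro: Ale)
    then have A0: "emeasure M' A = 0"
      by (simp add: M'.emeasure_eq_measure measure_nonneg antisym)
    have AE1: "AE x in M'. \<bar>x\<bar> < 1"
    proof (rule AE_I'[of A])
      show "A \<in> null_sets M'" using A0 Ameas by (simp add: null_sets_def)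
    qed (auto simp: A_def)
    have AEh: "AE x in M'. h x ^ i = x ^ i" for i
      using AE1 by eventually_elim (simp add: h_def)
    have intx: "integrable M' (\<lambda>x. x ^ i)" for i
      using integrable_cong_AE[OF _ _ AEh] hint by (simp add: hmeas)
    have momx: "integral\<^sup>L M' (\<lambda>x. x ^ i) = q i / q 0" for i
      using integral_cong_AE[OF _ _ AEh] Mh by (simp add: hmeas)
    define M where "M = density M' (\<lambda>_. ennreal (q 0))"
    show ?thesis
    proof (intro exI[of _ M] conjI allI)
      show "sets M = sets borel" by (simp add: M_def)
      fix n
      show "integrable M (\<lambda>\<mu>. \<mu> ^ n)"
        unfolding M_def using c intx by (subst integrable_density) auto
      show "q n = integral\<^sup>L M (\<lambda>\<mu>. \<mu> ^ n)"
        unfolding M_def using c by (subst integral_density) (auto simp: momx)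
    next
      have "UNIV - {-1<..<1::real} = A" by (auto simp: A_def)
      then show "emeasure M (UNIV - {-1<..<1}) = 0"
        unfolding M_def using Ameas A0 by (simp add: emeasure_density nn_integral_cmult_indicator)
    qed
  qed
qed



lemma forward_dir:
  fixes q :: "nat \<Rightarrow> real" and M :: "real measure"
  assumes sM: "sets M = sets borel"
    and mom: "\<forall>n. integrable M (\<lambda>\<mu>. \<mu> ^ n) \<and> q n = (\<integral>\<mu>. \<mu> ^ n \<partial>M)"
    and supp: "emeasure M (UNIV - {-1<..<1}) = 0"
  shows "(\<forall>g\<in>finseq. 0 \<le> hankel_form q g) \<and> q \<longlonglongrightarrow> 0"
proof
  have int: "integrable M (\<lambda>\<mu>. \<mu> ^ n)" and qn: "q n = (\<integral>\<mu>. \<mu> ^ n \<partial>M)" for n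
    using mom by auto
  have meas[measurable]: "f \<in> borel_measurable M" if "f \<in> borel_measurable borel" for f :: "real \<Rightarrow> real"
    using that measurable_cong_sets[OF sM refl] by blast
  have realpos: "0 \<le> (\<Sum>n\<in>S. \<Sum>m\<in>S. q (n + m) * c m * c n)" if "finite S" for S and c :: "nat \<Rightarrow> real"
  proof -
    have "(\<Sum>n\<in>S. \<Sum>m\<in>S. q (n + m) * c m * c n) = (\<Sum>n\<in>S. \<Sum>m\<in>S. (\<integral>\<mu>. c m * c n * \<mu> ^ (n + m) \<partial>M))"
      by (simp add: qn mult_ac)
    also have "\<dots> = (\<integral>\<mu>. (\<Sum>n\<in>S. \<Sum>m\<in>S. c m * c n * \<mu> ^ (n + m)) \<partial>M)"
      by (simp add: integral_sum int)
    also have "\<dots> = (\<integral>\<mu>. (\<Sum>m\<in>S. c m * \<mu> ^ m)^2 \<partial>M)"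
      by (simp add: power2_eq_square sum_distrib_left sum_distrib_right power_add mult_ac)
    also have "\<dots> \<ge> 0" by (rule integral_nonneg_AE) simp
    finally show ?thesis .
  qed
  show "\<forall>g\<in>finseq. 0 \<le> hankel_form q g"
  proof
    fix g assume "g \<in> finseq"
    define S where "S = {k. g k \<noteq> 0}"
    have fin: "finite S" using \<open>g \<in> finseq\<close> by (simp add: finseq_def S_def)
    have re: "Re (hankel_form q g) = (\<Sum>n\<in>S. \<Sum>m\<in>S. q (n + m) * Re (g m) * Re (g n))
        + (\<Sum>n\<in>S. \<Sum>m\<in>S. q (n + m) * Im (g m) * Im (g n))"
      unfolding hankel_form_def S_def[symmetric]
      by (simp add: Re_sum sum.distrib[symmetric] algebra_simps)
    have im: "Im (hankel_form q g) = (\<Sum>n\<in>S. \<Sum>m\<in>S. q (n + m) * Im (g m) * Re (g n))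
        - (\<Sum>n\<in>S. \<Sum>m\<in>S. q (n + m) * Re (g m) * Im (g n))"
      unfolding hankel_form_def S_def[symmetric]
      by (simp add: Im_sum sum_subtractf[symmetric] algebra_simps)
    have "(\<Sum>n\<in>S. \<Sum>m\<in>S. q (n + m) * Im (g m) * Re (g n)) = (\<Sum>n\<in>S. \<Sum>m\<in>S. q (n + m) * Re (g m) * Im (g n))"
      by (subst sum.swap) (simp add: add.commute mult_ac)
    then have "Im (hankel_form q g) = 0" unfolding im by simp
    moreover have "0 \<le> Re (hankel_form q g)"
      unfolding re using realpos[OF fin, of "\<lambda>k. Re (g k)"] realpos[OF fin, of "\<lambda>k. Im (g k)"] by simp
    ultimately show "0 \<le> hankel_form q g" by (simp add: less_eq_complex_def)
  qed
next
  have int: "integrable M (\<lambda>\<mu>. \<mu> ^ n)" and qn: "q n = (\<integral>\<mu>. \<mu> ^ n \<partial>M)" for n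
    using mom by auto
  have one: "integrable M (\<lambda>\<mu>. 1::real)" using int[of 0] by simp
  have null: "UNIV - {-1<..<1::real} \<in> null_sets M"
    using supp sM by (simp add: null_sets_def)
  have AE1: "AE \<mu> in M. \<bar>\<mu>\<bar> < 1"
    by (rule AE_I'[OF null]) auto
  have "(\<lambda>n. (\<integral>\<mu>. \<mu> ^ n \<partial>M)) \<longlonglongrightarrow> (\<integral>\<mu>. 0 \<partial>M)"
  proof (rule integral_dominated_convergence[where w="\<lambda>_. 1"])
    show "(\<lambda>\<mu>. 0::real) \<in> borel_measurable M" by simp
    show "(\<lambda>\<mu>. \<mu> ^ i) \<in> borel_measurable M" for i
      using int[of i] by (rule borel_measurable_integrable)
    show "integrable M (\<lambda>_. 1::real)" by (rule one)
    show "AE x in M. (\<lambda>i. x ^ i) \<longlonglongrightarrow> 0"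
      using AE1 by eventually_elim (intro LIMSEQ_power_zero, simp)
    show "AE x in M. norm (x ^ i) \<le> 1" for i
      using AE1 by eventually_elim (auto simp: power_abs intro!: power_le_one)
  qed
  then show "q \<longlonglongrightarrow> 0" by (simp add: qn[abs_def])
qed



theorem proposition4p1:
  fixes q :: "nat \<Rightarrow> real"
  shows "(\<exists>M :: real measure.
            sets M = sets borel \<and>
            (\<forall>n. integrable M (\<lambda>\<mu>. \<mu> ^ n) \<and> q n = (\<integral>\<mu>. \<mu> ^ n \<partial>M)) \<and>
            emeasure M (UNIV - {-1<..<1}) = 0)
         \<longleftrightarrow>
         ((\<forall>g\<in>finseq. 0 \<le> hankel_form q g) \<and> q \<longlonglongrightarrow> 0)"
proof
  assume "\<exists>M :: real measure.
            sets M = sets borel \<and>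
            (\<forall>n. integrable M (\<lambda>\<mu>. \<mu> ^ n) \<and> q n = (\<integral>\<mu>. \<mu> ^ n \<partial>M)) \<and>
            emeasure M (UNIV - {-1<..<1}) = 0"
  then obtain M :: "real measure" where M: "sets M = sets borel"
    "\<forall>n. integrable M (\<lambda>\<mu>. \<mu> ^ n) \<and> q n = (\<integral>\<mu>. \<mu> ^ n \<partial>M)"
    "emeasure M (UNIV - {-1<..<1}) = 0"
    by blast
  show "(\<forall>g\<in>finseq. 0 \<le> hankel_form q g) \<and> q \<longlonglongrightarrow> 0"
    by (rule forward_dir[OF M])
next
  assume A: "(\<forall>g\<in>finseq. 0 \<le> hankel_form q g) \<and> q \<longlonglongrightarrow> 0"
  show "\<exists>M :: real measure.
            sets M = sets borel \<and>
            (\<forall>n. integrable M (\<lambda>\<mu>. \<mu> ^ n) \<and> q n = (\<integral>\<mu>. \<mu> ^ n \<partial>M)) \<and>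
            emeasure M (UNIV - {-1<..<1}) = 0"
    using A by (intro reverse_dir) auto
qed

end
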